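(* Let $f:X\to\mathcal G$ be convex and $x_0\in\operatorname{dom} f$. If $x_0$ solves the strict set-valued Minty inequality, i.e. $f'(x,x_0-x)\supseteq 0^+f(x_0)$ for all $x\in X$, then it solves the strict scalarized Minty inequality, i.e. $\varphi'_{f,z^*}(x,x_0-x)\le0$ for all $x\in X$ and $z^*\in C^-\setminus\{0\}$. If additionally the weak regularity condition $f'(x,u)=\bigcap_{z^*\in C^-\setminus\{0\}}f'_{z^*}(x,u)$ holds for all $x,u\in X$, then the reverse implication holds as well.
   Context: $X$ real linear space, $Z$ real locally convex Hausdorff space with dual $Z^*$, $C\subseteq Z$ closed convex cone, $0\in C$, $C^-=\{z^*:z^*(c)\le0\ \forall c\in C\}$, $C^-\setminus\{0\}\ne\emptyset$. $\mathcal G=\{A\subseteq Z:A=\operatorname{cl}\operatorname{co}(A+C)\}$; $A\oplus B=\operatorname{cl}\{a+b\}$, $tA=\{ta\}$ ($t>0$), $A\ominus B=\{z:B+\{z\}\subseteq A\}$; $0^+A=\{z:A+\{z\}\subseteq A\}$ for $A\ne\emptyset$. $f$ convex: $f(tx_1+(1-t)x_2)\supseteq tf(x_1)\oplus(1-t)f(x_2)$; $\operatorname{dom}f=\{x:f(x)\neq\emptyset\}$. For $g:X\to\mathcal G$, $g'(x,u)=\bigcap_{t_0>0}\operatorname{cl}\operatorname{co}\bigcup_{0<t<t_0}\frac1t(g(x+tu)\ominus g(x))$. On $\overline{\mathbb R}$: inf-addition $\dot+$ ($(-\infty)\dot+(+\infty)=+\infty$), $r\ominus s=\inf\{t\in\mathbb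 R:r\le s\dot+t\}$ ($\inf\emptyset=+\infty$). $\varphi_{f,z^*}(x)=\inf\{-z^*(z):z\in f(x)\}$ ($+\infty$ if $f(x)=\emptyset$), $\varphi'_{f,z^*}(x,u)=\inf_{t>0}\frac1t(\varphi_{f,z^*}(x+tu)\ominus\varphi_{f,z^*}(x))$. $f_{z^*}(x)=\{z:\varphi_{f,z^*}(x)\le -z^*(z)\}$, and $f'_{z^*}$ is the directional derivative of $f_{z^*}$. *)

theory Defs
  imports "HOL-Analysis.Analysis"
begin

(* Z is a real locally convex Hausdorff topological vector space.
   Hausdorff comes from the type class t2_space; the rest is this predicate. *)
definition lc_tvs :: "'z::{real_vector,topological_space} itself \<Rightarrow> bool" where
  "lc_tvs _ \<longleftrightarrow>
     continuous_on UNIV (\<lambda>p::'z \<times> 'z. fst p + snd p) \<and>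
     continuous_on UNIV (\<lambda>p::real \<times> 'z. fst p *\<^sub>R snd p) \<and>
     (\<forall>U::'z set. open U \<and> 0 \<in> U \<longrightarrow> (\<exists>V. open V \<and> convex V \<and> 0 \<in> V \<and> V \<subseteq> U))"

definition dualsp :: "('z::{real_vector,topological_space} \<Rightarrow> real) set" where
  "dualsp = {zs. linear zs \<and> continuous_on UNIV zs}"

definition negdual :: "'z::{real_vector,topological_space} set \<Rightarrow> ('z \<Rightarrow> real) set" where
  "negdual C = {zs \<in> dualsp. \<forall>c\<in>C. zs c \<le> 0}"

definition setplus :: "'z::real_vector set \<Rightarrow> 'z set \<Rightarrow> 'z set" where
  "setplus A B = {a + b | a b. a \<in> A \<and> b \<in> B}"

definition setscale :: "real \<Rightarrow> 'z::real_vector set \<Rightarrow> 'z set" where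
  "setscale t A = {t *\<^sub>R a | a. a \<in> A}"

definition GC :: "'z::{real_vector,topological_space} set \<Rightarrow> 'z set set" where
  "GC C = {A. A = closure (convex hull (setplus A C))}"

definition oplus :: "'z::{real_vector,topological_space} set \<Rightarrow> 'z set \<Rightarrow> 'z set" where
  "oplus A B = closure (setplus A B)"

definition ominus :: "'z::real_vector set \<Rightarrow> 'z set \<Rightarrow> 'z set" where
  "ominus A B = {z. setplus B {z} \<subseteq> A}"

(* recession cone 0^+A (used only for nonempty A) *)
definition recc :: "'z::real_vector set \<Rightarrow> 'z set" where
  "recc A = {z. setplus A {z} \<subseteq> A}"

definition sv_convex :: "('x::real_vector \<Rightarrow> 'z::{real_vector,topological_space} set) \<Rightarrow> bool" where
  "sv_convex f \<longleftrightarrow> (\<forall>x1 x2 t. 0 < t \<and> t < 1 \<longrightarrow>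
      oplus (setscale t (f x1)) (setscale (1 - t) (f x2)) \<subseteq> f (t *\<^sub>R x1 + (1 - t) *\<^sub>R x2))"

definition sv_dom :: "('x \<Rightarrow> 'z set) \<Rightarrow> 'x set" where
  "sv_dom f = {x. f x \<noteq> {}}"

definition sv_dirder :: "('x::real_vector \<Rightarrow> 'z::{real_vector,topological_space} set) \<Rightarrow> 'x \<Rightarrow> 'x \<Rightarrow> 'z set" where
  "sv_dirder g x u = (\<Inter>t0\<in>{t0::real. t0 > 0}.
      closure (convex hull (\<Union>t\<in>{t. 0 < t \<and> t < t0}. setscale (1 / t) (ominus (g (x + t *\<^sub>R u)) (g x)))))"

definition inf_add :: "ereal \<Rightarrow> ereal \<Rightarrow> ereal" where
  "inf_add r s = (if r = \<infinity> \<or> s = \<infinity> then \<infinity> else r + s)"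

(* r \<ominus> s = inf {t \<in> \<real>. r \<le> s \<dot>+ t}, inf of empty set = +\<infinity> *)
definition ediff :: "ereal \<Rightarrow> ereal \<Rightarrow> ereal" where
  "ediff r s = Inf (ereal ` {t::real. r \<le> inf_add s (ereal t)})"

definition phi :: "('x \<Rightarrow> 'z set) \<Rightarrow> ('z \<Rightarrow> real) \<Rightarrow> 'x \<Rightarrow> ereal" where
  "phi f zs x = Inf ((\<lambda>z. ereal (- zs z)) ` f x)"

definition phi_dirder :: "('x::real_vector \<Rightarrow> 'z set) \<Rightarrow> ('z \<Rightarrow> real) \<Rightarrow> 'x \<Rightarrow> 'x \<Rightarrow> ereal" where
  "phi_dirder f zs x u = (INF t\<in>{t::real. t > 0}.
      ereal (1 / t) * ediff (phi f zs (x + t *\<^sub>R u)) (phi f zs x))"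

definition fzs :: "('x \<Rightarrow> 'z set) \<Rightarrow> ('z \<Rightarrow> real) \<Rightarrow> 'x \<Rightarrow> 'z set" where
  "fzs f zs x = {z. phi f zs x \<le> ereal (- zs z)}"

end

theory Submission
  imports Defs
begin


lemma phi_le: "a \<in> f y \<Longrightarrow> phi f zs y \<le> ereal (- zs a)"
  unfolding phi_def by (rule INF_lower)

lemma phi_lessE: "phi f zs y < ereal c \<Longrightarrow> \<exists>a\<in>f y. - zs a < c"
  unfolding phi_def by (simp add: INF_less_iff)

lemma phi_empty: "f y = {} \<Longrightarrow> phi f zs y = \<infinity>"
  unfolding phi_def by (simp add: top_ereal_def)

lemma phi_nonempty: "f y \<noteq> {} \<Longrightarrow> phi f zs y < \<infinity>"
proof -
  assume "f y \<noteq> {}" then obtain a where "a \<in> f y" by blast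
  then have "phi f zs y \<le> ereal (- zs a)" by (rule phi_le)
  then show ?thesis by (rule order_le_less_trans) simp
qed


lemma ex_ereal_above: "(x::ereal) < \<infinity> \<Longrightarrow> \<exists>c. x < ereal c"
proof (cases x)
  case (real r) then show ?thesis by (intro exI[of _ "r + 1"]) simp
qed auto

lemma all_below_minf: "x = -\<infinity>" if "\<And>M. (x::ereal) < ereal M"
proof (cases x)
  case (real r) then show ?thesis using that[of r] by simp
next
  case PInf then show ?thesis using that[of 0] by simp
qed simp

lemma conv_mem:
  assumes "sv_convex f" "0 < l" "l < 1" "a \<in> f y1" "b \<in> f y2"
  shows "l *\<^sub>R a + (1 - l) *\<^sub>R b \<in> f (l *\<^sub>R y1 + (1 - l) *\<^sub>R y2)"
proof -
  have sa: "l *\<^sub>R a \<in> setscale l (f y1)" unfolding setscale_def using assms(4) by blast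
  have sb: "(1 - l) *\<^sub>R b \<in> setscale (1 - l) (f y2)" unfolding setscale_def using assms(5) by blast
  have "l *\<^sub>R a + (1 - l) *\<^sub>R b \<in> setplus (setscale l (f y1)) (setscale (1 - l) (f y2))"
    unfolding setplus_def using sa sb by blast
  then have "l *\<^sub>R a + (1 - l) *\<^sub>R b \<in> oplus (setscale l (f y1)) (setscale (1 - l) (f y2))"
    unfolding oplus_def by (rule rev_subsetD[OF _ closure_subset])
  moreover have "oplus (setscale l (f y1)) (setscale (1 - l) (f y2)) \<subseteq> f (l *\<^sub>R y1 + (1 - l) *\<^sub>R y2)"
    using assms(1,2,3) unfolding sv_convex_def by simp
  ultimately show ?thesis by (rule subsetD[rotated])
qed

lemma phi_conv:
  assumes "sv_convex f" "linear zs" "0 < l" "l < 1"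
    "phi f zs y1 < ereal c1" "phi f zs y2 < ereal c2"
  shows "phi f zs (l *\<^sub>R y1 + (1 - l) *\<^sub>R y2) < ereal (l * c1 + (1 - l) * c2)"
proof -
  obtain a where a: "a \<in> f y1" "- zs a < c1" using phi_lessE[OF assms(5)] by blast
  obtain b where b: "b \<in> f y2" "- zs b < c2" using phi_lessE[OF assms(6)] by blast
  have h1: "phi f zs (l *\<^sub>R y1 + (1 - l) *\<^sub>R y2) \<le> ereal (- zs (l *\<^sub>R a + (1 - l) *\<^sub>R b))"
    by (rule phi_le[where f=f and y="l *\<^sub>R y1 + (1 - l) *\<^sub>R y2"], rule conv_mem[OF assms(1,3,4) a(1) b(1)])
  have h2: "- zs (l *\<^sub>R a + (1 - l) *\<^sub>R b) = l * (- zs a) + (1 - l) * (- zs b)"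
    using assms(2) by (simp add: linear_add linear_scale)
  have h3: "l * (- zs a) + (1 - l) * (- zs b) < l * c1 + (1 - l) * c2"
    using a b assms(3,4) by (intro add_strict_mono mult_strict_left_mono) auto
  have "ereal (- zs (l *\<^sub>R a + (1 - l) *\<^sub>R b)) < ereal (l * c1 + (1 - l) * c2)"
    using h2 h3 by simp
  then show ?thesis using h1 by (rule order_le_less_trans[rotated])
qed

lemma phi_minf:
  assumes "sv_convex f" "linear zs" "0 < l" "l < 1" "f y1 \<noteq> {}" "f y2 \<noteq> {}"
    "phi f zs y1 = -\<infinity> \<or> phi f zs y2 = -\<infinity>"
  shows "phi f zs (l *\<^sub>R y1 + (1 - l) *\<^sub>R y2) = -\<infinity>"
proof (rule all_below_minf)
  fix M
  obtain c1 where c1: "phi f zs y1 < ereal c1" using ex_ereal_above[OF phi_nonempty[where f=f and y=y1 and zs=zs, OF assms(5)]] by blast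
  obtain c2 where c2: "phi f zs y2 < ereal c2" using ex_ereal_above[OF phi_nonempty[where f=f and y=y2 and zs=zs, OF assms(6)]] by blast
  show "phi f zs (l *\<^sub>R y1 + (1 - l) *\<^sub>R y2) < ereal M"
    using assms(7)
  proof
    assume "phi f zs y1 = -\<infinity>"
    then have "phi f zs y1 < ereal ((M - (1 - l) * c2) / l)" by simp
    from phi_conv[OF assms(1-4) this c2] show ?thesis using assms(3) by simp
  next
    assume "phi f zs y2 = -\<infinity>"
    then have "phi f zs y2 < ereal ((M - l * c1) / (1 - l))" by simp
    from phi_conv[OF assms(1-4) c1 this] show ?thesis using assms(4) by simp
  qed
qed

lemma Inf_ereal_atLeast: "Inf (ereal ` {t. a \<le> t}) = ereal a"
  by (rule antisym) (auto intro: Inf_lower Inf_greatest)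

lemma ediff_real: "ediff r (ereal p) = r - ereal p"
proof (cases r)
  case (real q)
  have "{t. r \<le> inf_add (ereal p) (ereal t)} = {t. q - p \<le> t}"
    using real by (auto simp: inf_add_def)
  then show ?thesis using real by (simp add: ediff_def Inf_ereal_atLeast)
next
  case PInf
  have "{t. r \<le> inf_add (ereal p) (ereal t)} = {}"
    using PInf by (auto simp: inf_add_def)
  then show ?thesis using PInf by (simp add: ediff_def top_ereal_def)
next
  case MInf
  have "{t. r \<le> inf_add (ereal p) (ereal t)} = UNIV"
    using MInf by (auto simp: inf_add_def)
  moreover have "Inf (range ereal) = -\<infinity>"
  proof (rule all_below_minf)
    fix M show "Inf (range ereal) < ereal M"
      by (rule order_le_less_trans[of _ "ereal (M - 1)"]) (auto intro: Inf_lower)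
  qed
  ultimately show ?thesis using MInf by (simp add: ediff_def)
qed

lemma ereal_sub_le1: "(P::ereal) \<le> ereal a + ereal c \<Longrightarrow> P - ereal c \<le> ereal a"
  by (cases P) auto

lemma ereal_sub_le2: "(P::ereal) - ereal c \<le> Q \<Longrightarrow> P \<le> Q + ereal c"
  by (cases P; cases Q) auto

lemma ediff_le: "r \<le> inf_add s (ereal c) \<Longrightarrow> ediff r s \<le> ereal c"
  unfolding ediff_def by (rule Inf_lower) simp

lemma halfspace_closed_convex:
  fixes zs :: "'z::{real_vector,topological_space} \<Rightarrow> real"
  assumes lin: "linear zs" and cont: "continuous_on UNIV zs"
  shows "closed {w. D \<le> ereal (- zs w)} \<and> convex {w. D \<le> ereal (- zs w)}"
proof (cases D)
  case (real r)
  then have eq: "{w. D \<le> ereal (- zs w)} = {w. zs w \<le> - r}" by auto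
  have "closed {w. zs w \<le> - r}"
    by (rule closed_Collect_le[OF cont continuous_on_const])
  moreover have "convex {w. zs w \<le> - r}"
    unfolding convex_def
  proof (intro ballI allI impI, simp)
    fix x y :: 'z and u v :: real
    assume "zs x \<le> - r" "zs y \<le> - r" "0 \<le> u" "0 \<le> v" "u + v = 1"
    then have "u * zs x + v * zs y \<le> u * (-r) + v * (-r)"
      by (intro add_mono mult_left_mono) auto
    also have "\<dots> = - r" using \<open>u + v = 1\<close> by algebra
    finally show "zs (u *\<^sub>R x + v *\<^sub>R y) \<le> - r"
      using lin by (simp add: linear_add linear_scale)
  qed
  ultimately show ?thesis using eq by simp
next
  case PInf
  then have "{w. D \<le> ereal (- zs w)} = {}" by auto
  then show ?thesis by simp
next
  case MInf
  then have "{w. D \<le> ereal (- zs w)} = UNIV" by auto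
  then show ?thesis by simp
qed

lemma part1:
  fixes f :: "'x::real_vector \<Rightarrow> 'z::{real_vector,topological_space} set"
  assumes lin: "linear zs" and cont: "continuous_on UNIV zs"
    and H: "0 \<in> sv_dirder f x u"
  shows "phi_dirder f zs x u \<le> 0"
proof -
  define D where "D = phi_dirder f zs x u"
  define S where "S = {w. D \<le> ereal (- zs w)}"
  have cS: "closed S" and vS: "convex S"
    using halfspace_closed_convex[OF lin cont] unfolding S_def by auto
  have US: "(\<Union>t\<in>{t. 0 < t \<and> t < 1}. setscale (1 / t) (ominus (f (x + t *\<^sub>R u)) (f x))) \<subseteq> S"
  proof (rule UN_least, rule subsetI)
    fix t w assume t: "t \<in> {t. 0 < t \<and> t < (1::real)}"
      and w: "w \<in> setscale (1 / t) (ominus (f (x + t *\<^sub>R u)) (f x))"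
    from w obtain v where wv: "w = (1 / t) *\<^sub>R v" and v: "setplus (f x) {v} \<subseteq> f (x + t *\<^sub>R u)"
      unfolding setscale_def ominus_def by auto
    have va: "a + v \<in> f (x + t *\<^sub>R u)" if "a \<in> f x" for a
      using v that unfolding setplus_def by blast
    have key: "phi f zs (x + t *\<^sub>R u) \<le> inf_add (phi f zs x) (ereal (- zs v))"
    proof (cases "phi f zs x = \<infinity>")
      case True then show ?thesis by (simp add: inf_add_def)
    next
      case False
      have "phi f zs (x + t *\<^sub>R u) - ereal (- zs v) \<le> phi f zs x"
        unfolding phi_def[of f zs x]
      proof (rule INF_greatest)
        fix a assume a: "a \<in> f x"
        have "phi f zs (x + t *\<^sub>R u) \<le> ereal (- zs (a + v))" by (rule phi_le[where f=f and y="x + t *\<^sub>R u"], rule va[OF a])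
        also have "\<dots> = ereal (- zs a) + ereal (- zs v)" using lin by (simp add: linear_add)
        finally show "phi f zs (x + t *\<^sub>R u) - ereal (- zs v) \<le> ereal (- zs a)"
          by (rule ereal_sub_le1)
      qed
      then have "phi f zs (x + t *\<^sub>R u) \<le> phi f zs x + ereal (- zs v)"
        by (rule ereal_sub_le2)
      then show ?thesis using False by (simp add: inf_add_def)
    qed
    have "D \<le> ereal (1 / t) * ediff (phi f zs (x + t *\<^sub>R u)) (phi f zs x)"
      unfolding D_def phi_dirder_def using t by (intro INF_lower) simp
    also have "\<dots> \<le> ereal (1 / t) * ereal (- zs v)"
      using t by (intro ereal_mult_left_mono ediff_le[OF key]) simp
    also have "\<dots> = ereal (- zs w)" using lin wv by (simp add: linear_scale)
    finally show "w \<in> S" unfolding S_def by simp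
  qed
  have "sv_dirder f x u \<subseteq> closure (convex hull (\<Union>t\<in>{t. 0 < t \<and> t < 1}. setscale (1 / t) (ominus (f (x + t *\<^sub>R u)) (f x))))"
    unfolding sv_dirder_def by (rule INT_lower) simp
  also have "\<dots> \<subseteq> S" by (rule closure_minimal[OF hull_minimal[where S=convex, OF US vS] cS])
  finally have "0 \<in> S" using H by blast
  then show ?thesis by (simp add: S_def D_def linear_0[OF lin] zero_ereal_def)
qed

lemma closure_from_seq:
  fixes z :: "'z::{real_vector,topological_space}"
  assumes Z: "lc_tvs TYPE('z)" and mem: "\<And>n. z - inverse (real (Suc n)) *\<^sub>R v \<in> U"
  shows "z \<in> closure U"
proof -
  have cadd: "continuous_on UNIV (\<lambda>p::'z \<times> 'z. fst p + snd p)"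
    and cmul: "continuous_on UNIV (\<lambda>p::real \<times> 'z. fst p *\<^sub>R snd p)"
    using Z unfolding lc_tvs_def by auto
  have "((\<lambda>n. (inverse (real (Suc n)), - v)) \<longlongrightarrow> (0, - v)) sequentially"
    by (intro tendsto_Pair LIMSEQ_inverse_real_of_nat tendsto_const)
  from continuous_on_tendsto_compose[OF cmul this] have
    "((\<lambda>n. inverse (real (Suc n)) *\<^sub>R - v) \<longlongrightarrow> 0) sequentially" by simp
  then have "((\<lambda>n. (z, inverse (real (Suc n)) *\<^sub>R - v)) \<longlongrightarrow> (z, 0)) sequentially"
    by (intro tendsto_Pair tendsto_const)
  from continuous_on_tendsto_compose[OF cadd this] have
    "((\<lambda>n. z + inverse (real (Suc n)) *\<^sub>R - v) \<longlongrightarrow> z) sequentially" by simp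
  then have lim: "((\<lambda>n. z - inverse (real (Suc n)) *\<^sub>R v) \<longlongrightarrow> z) sequentially" by simp
  show ?thesis
    by (rule Lim_in_closed_set[OF closed_closure _ _ lim])
      (use mem closure_subset in \<open>auto intro!: always_eventually\<close>)
qed

lemma recc_bound:
  assumes lin: "linear zs" and z: "z \<in> recc A" and b: "b \<in> A"
    and p0: "Inf ((\<lambda>z. ereal (- zs z)) ` A) = ereal p0"
  shows "zs z \<le> 0"
proof (rule ccontr)
  assume "\<not> zs z \<le> 0" then have pos: "zs z > 0" by simp
  have mem: "b + real n *\<^sub>R z \<in> A" for n
  proof (induction n)
    case 0 then show ?case using b by simp
  next
    case (Suc n)
    have "(b + real n *\<^sub>R z) + z \<in> A"
      using z Suc unfolding recc_def setplus_def by blast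
    then show ?case by (simp add: algebra_simps)
  qed
  have le: "p0 \<le> - zs b - real n * zs z" for n
  proof -
    have "ereal p0 \<le> ereal (- zs (b + real n *\<^sub>R z))"
      unfolding p0[symmetric] by (rule INF_lower[OF mem])
    then show ?thesis using lin by (simp add: linear_add linear_scale)
  qed
  obtain n where "real n * zs z > - zs b - p0" using pos reals_Archimedean3 by blast
  with le[of n] show False by simp
qed

lemma part2:
  fixes f :: "'x::real_vector \<Rightarrow> 'z::{real_vector,topological_space} set"
  assumes Z: "lc_tvs TYPE('z)" and conv: "sv_convex f" and lin: "linear zs"
    and nz: "zs \<noteq> (\<lambda>_. 0)" and x0: "f x0 \<noteq> {}"
    and H: "phi_dirder f zs x (x0 - x) \<le> 0" and z: "z \<in> recc (f x0)"
  shows "z \<in> sv_dirder (fzs f zs) x (x0 - x)"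
proof -
  define u where "u = x0 - x"
  have xt: "x + t *\<^sub>R u = t *\<^sub>R x0 + (1 - t) *\<^sub>R x" for t
    by (simp add: u_def algebra_simps)
  define U where "U t0 = (\<Union>t\<in>{t. 0 < t \<and> t < t0}.
      setscale (1 / t) (ominus (fzs f zs (x + t *\<^sub>R u)) (fzs f zs x)))" for t0
  have inU: "w \<in> U t0"
    if "0 < t" "t < t0" "setplus (fzs f zs x) {t *\<^sub>R w} \<subseteq> fzs f zs (x + t *\<^sub>R u)" for w t t0
  proof -
    have "w = (1 / t) *\<^sub>R (t *\<^sub>R w)" using that(1) by simp
    then have "w \<in> setscale (1 / t) (ominus (fzs f zs (x + t *\<^sub>R u)) (fzs f zs x))"
      unfolding setscale_def ominus_def using that(3) by blast
    then show ?thesis unfolding U_def using that(1,2) by blast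
  qed
  have main: "z \<in> closure (U t0)" if t0: "t0 > 0" for t0
  proof (cases "f x = {}")
    case True
    then have "fzs f zs x = {}" by (simp add: fzs_def phi_empty)
    then have "z \<in> U t0" by (intro inU[of "t0/2"]) (auto simp: setplus_def t0)
    then show ?thesis using closure_subset by blast
  next
    case fx: False
    show ?thesis
    proof (cases "phi f zs x = -\<infinity> \<or> phi f zs x0 = -\<infinity>")
      case True
      define t where "t = min t0 1 / 2"
      have t: "0 < t" "t < t0" "t < 1" using t0 by (auto simp: t_def)
      have "phi f zs (x + t *\<^sub>R u) = -\<infinity>" unfolding xt
        by (rule phi_minf[OF conv lin t(1) t(3) x0 fx]) (use True in auto)
      then have "fzs f zs (x + t *\<^sub>R u) = UNIV" by (simp add: fzs_def)
      then have "z \<in> U t0" by (intro inU[OF t(1,2)]) auto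
      then show ?thesis using closure_subset by blast
    next
      case False
      obtain p where p: "phi f zs x = ereal p"
        using False phi_nonempty[where f=f and y=x and zs=zs, OF fx] by (cases "phi f zs x") auto
      obtain p0 where p0: "phi f zs x0 = ereal p0"
        using False phi_nonempty[where f=f and y=x0 and zs=zs, OF x0] by (cases "phi f zs x0") auto
      obtain b where b: "b \<in> f x0" using x0 by blast
      have zz: "zs z \<le> 0" by (rule recc_bound[OF lin z b]) (use p0 in \<open>simp add: phi_def\<close>)
      define d where "d s = ereal (1 / s) * ediff (phi f zs (x + s *\<^sub>R u)) (phi f zs x)" for s
      have d_eq: "d s = ereal (1/s) * (phi f zs (x + s *\<^sub>R u) - ereal p)" for s
        by (simp add: d_def p ediff_real)
      have mono: "d s \<le> d t" if st: "0 < s" "s < t" for s t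
      proof -
        have eqx: "x + s *\<^sub>R u = (s/t) *\<^sub>R (x + t *\<^sub>R u) + (1 - s/t) *\<^sub>R x"
          using st by (simp add: algebra_simps)
        show ?thesis
        proof (cases "phi f zs (x + t *\<^sub>R u)")
          case PInf then show ?thesis using st by (simp add: d_eq)
        next
          case MInf
          have ne: "f (x + t *\<^sub>R u) \<noteq> {}" using phi_empty MInf by force
          have "phi f zs (x + s *\<^sub>R u) = -\<infinity>" unfolding eqx
            by (rule phi_minf[OF conv lin _ _ ne fx]) (use st MInf in auto)
          then show ?thesis using st by (simp add: d_eq)
        next
          case (real q)
          have lt: "phi f zs (x + s *\<^sub>R u) < ereal ((s/t) * q + (1 - s/t) * p + e)" if e: "e > 0" for e
          proof -
            have "phi f zs (x + s *\<^sub>R u) < ereal ((s/t) * (q + e) + (1 - s/t) * (p + e))"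
              unfolding eqx by (rule phi_conv[OF conv lin]) (use st real p e in auto)
            moreover have "(s/t) * (q + e) + (1 - s/t) * (p + e) = (s/t) * q + (1 - s/t) * p + e"
              by (simp add: algebra_simps add_divide_distrib)
            ultimately show ?thesis by simp
          qed
          show ?thesis
          proof (cases "phi f zs (x + s *\<^sub>R u)")
            case (real r)
            have r: "r \<le> (s/t) * q + (1 - s/t) * p"
            proof (rule ccontr)
              assume "\<not> ?thesis"
              then have "r - ((s/t) * q + (1 - s/t) * p) > 0" by simp
              from lt[OF this] real show False by simp
            qed
            have "(r - p) / s \<le> (q - p) / t"
            proof -
              have "(s/t) * q + (1 - s/t) * p = p + (s/t) * (q - p)" by (simp add: algebra_simps diff_divide_distrib)
              then have "r - p \<le> (s/t) * (q - p)" using r by linarith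
              then have "(r - p) / s \<le> ((s/t) * (q - p)) / s" by (rule divide_right_mono) (use st in auto)
              also have "\<dots> = (q - p) / t" using st by simp
              finally show ?thesis .
            qed
            then show ?thesis using real \<open>phi f zs (x + t *\<^sub>R u) = ereal q\<close> st by (simp add: d_eq)
          next
            case PInf then show ?thesis using lt[of 1] by simp
          next
            case MInf then show ?thesis using st by (simp add: d_eq)
          qed
        qed
      qed
      have small: "\<exists>s. 0 < s \<and> s < t0 \<and> d s < ereal e" if e: "e > 0" for e
      proof -
        have "(INF t\<in>{t. t > 0}. d t) \<le> 0" using H unfolding phi_dirder_def d_def u_def .
        then have "(INF t\<in>{t. t > 0}. d t) < ereal e" using e by (simp add: order_le_less_trans)
        then obtain t where t: "t > 0" "d t < ereal e" by (auto simp: INF_less_iff)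
        show ?thesis
        proof (cases "t < t0")
          case True then show ?thesis using t by blast
        next
          case False
          then have "d (t0/2) \<le> d t" using t0 by (intro mono) auto
          then show ?thesis using t t0 by (intro exI[of _ "t0/2"]) auto
        qed
      qed
      have memU: "w \<in> U t0" if sw: "0 < s" "s < t0" "d s < ereal (- zs w)" for s w
      proof (rule inU[OF sw(1,2)], rule subsetI)
        fix y assume "y \<in> setplus (fzs f zs x) {s *\<^sub>R w}"
        then obtain a where a: "p \<le> - zs a" "y = a + s *\<^sub>R w"
          by (auto simp: setplus_def fzs_def p)
        show "y \<in> fzs f zs (x + s *\<^sub>R u)"
        proof (cases "phi f zs (x + s *\<^sub>R u)")
          case (real r)
          from sw(3) have "(r - p) / s < - zs w" using real by (simp add: d_eq)
          then have "r - p < s * (- zs w)" using sw(1) by (simp add: divide_less_eq mult.commute)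
          then show ?thesis using a lin real by (simp add: fzs_def linear_add linear_scale)
        next
          case PInf then show ?thesis using sw by (simp add: d_eq)
        next
          case MInf then show ?thesis by (simp add: fzs_def)
        qed
      qed
      obtain v0 where v0: "zs v0 \<noteq> 0" using nz by auto
      define v where "v = (1 / zs v0) *\<^sub>R v0"
      have zv: "zs v = 1" using lin v0 by (simp add: v_def linear_scale)
      show ?thesis
      proof (rule closure_from_seq[OF Z])
        fix n
        define e where "e = inverse (real (Suc n))"
        have e: "e > 0" by (simp add: e_def)
        obtain s where s: "0 < s" "s < t0" "d s < ereal e" using small[OF e] by blast
        have "- zs (z - e *\<^sub>R v) = - zs z + e" using lin zv by (simp add: linear_diff linear_scale)
        then have "e \<le> - zs (z - e *\<^sub>R v)" using zz by simp
        then have "d s < ereal (- zs (z - e *\<^sub>R v))" using s(3)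
          by (meson ereal_less_eq(3) order_less_le_trans)
        from memU[OF s(1,2) this] show "z - inverse (real (Suc n)) *\<^sub>R v \<in> U t0"
          by (simp add: e_def)
      qed
    qed
  qed
  show ?thesis unfolding sv_dirder_def
  proof (rule INT_I)
    fix t0 assume "t0 \<in> {t0::real. t0 > 0}"
    then have "z \<in> closure (U t0)" using main by simp
    then show "z \<in> closure (convex hull (\<Union>t\<in>{t. 0 < t \<and> t < t0}.
        setscale (1 / t) (ominus (fzs f zs (x + t *\<^sub>R (x0 - x))) (fzs f zs x))))"
      using closure_mono[OF hull_subset] unfolding U_def u_def by blast
  qed
qed


theorem mainTheorem11:
  fixes f :: "'x::real_vector \<Rightarrow> 'z::{real_vector,t2_space} set"
    and C :: "'z set" and x0 :: 'x
  assumes Z: "lc_tvs TYPE('z)"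
    and C: "closed C" "convex C" "cone C" "0 \<in> C"
    and Cne: "negdual C - {\<lambda>_. 0} \<noteq> {}"
    and fG: "\<forall>x. f x \<in> GC C"
    and fconv: "sv_convex f"
    and x0: "x0 \<in> sv_dom f"
  shows "((\<forall>x. recc (f x0) \<subseteq> sv_dirder f x (x0 - x)) \<longrightarrow>
           (\<forall>x. \<forall>zs \<in> negdual C - {\<lambda>_. 0}. phi_dirder f zs x (x0 - x) \<le> 0))
       \<and> ((\<forall>x u. sv_dirder f x u = (\<Inter>zs \<in> negdual C - {\<lambda>_. 0}. sv_dirder (fzs f zs) x u)) \<longrightarrow>
           (\<forall>x. \<forall>zs \<in> negdual C - {\<lambda>_. 0}. phi_dirder f zs x (x0 - x) \<le> 0) \<longrightarrow>
           (\<forall>x. recc (f x0) \<subseteq> sv_dirder f x (x0 - x)))"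
proof (intro conjI impI allI ballI subsetI)
  fix x zs
  assume H1: "\<forall>x. recc (f x0) \<subseteq> sv_dirder f x (x0 - x)" and zs: "zs \<in> negdual C - {\<lambda>_. 0}"
  have "0 \<in> recc (f x0)" by (auto simp: recc_def setplus_def)
  then have "0 \<in> sv_dirder f x (x0 - x)" using H1 by blast
  moreover have "linear zs" "continuous_on UNIV zs" using zs by (auto simp: negdual_def dualsp_def)
  ultimately show "phi_dirder f zs x (x0 - x) \<le> 0" using part1 by blast
next
  fix x z
  assume reg: "\<forall>x u. sv_dirder f x u = (\<Inter>zs \<in> negdual C - {\<lambda>_. 0}. sv_dirder (fzs f zs) x u)"
    and H2: "\<forall>x. \<forall>zs \<in> negdual C - {\<lambda>_. 0}. phi_dirder f zs x (x0 - x) \<le> 0"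
    and z: "z \<in> recc (f x0)"
  have x0ne: "f x0 \<noteq> {}" using x0 by (simp add: sv_dom_def)
  have "z \<in> sv_dirder (fzs f zs) x (x0 - x)" if zs: "zs \<in> negdual C - {\<lambda>_. 0}" for zs
  proof (rule part2[OF Z fconv _ _ x0ne _ z])
    show "linear zs" using zs by (auto simp: negdual_def dualsp_def)
    show "zs \<noteq> (\<lambda>_. 0)" using zs by auto
    show "phi_dirder f zs x (x0 - x) \<le> 0" using H2 zs by blast
  qed
  then show "z \<in> sv_dirder f x (x0 - x)" using reg by blast
qed

end
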